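(* Let $n\ge 1$ and let $a_1,\dots,a_n$ be nonnegative integers. Then, as Laurent polynomials in $z_1,\dots,z_n$, $$\mathop{\mathrm{CT}}_{\mathbf z}\frac{(z_1+\cdots+z_n)^{a_1+\cdots+a_n}}{z_1^{a_1}\cdots z_n^{a_n}}\prod_{1\le i\ne j\le n}\left(1-\frac{z_i}{z_j}\right)^{a_j}=\frac{(a_1+a_2+\cdots+a_n)!}{a_1!\,a_2!\cdots a_n!},$$ where $\mathop{\mathrm{CT}}_{\mathbf z}$ denotes the coefficient of $z_1^0\cdots z_n^0$. *)

theory Defs
  imports Complex_Main "HOL-Library.Poly_Mapping"
begin

text \<open>Laurent polynomials with integer coefficients in variables z_i (i :: nat):
  finitely supported maps from integer exponent vectors (finitely supported
  nat => int) to coefficients; multiplication is convolution.\<close>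
type_synonym laurent = "(nat \<Rightarrow>\<^sub>0 int) \<Rightarrow>\<^sub>0 int"

definition lvar :: "nat \<Rightarrow> laurent" where
  "lvar i = Poly_Mapping.single (Poly_Mapping.single i 1) 1"

definition lvar_inv :: "nat \<Rightarrow> laurent" where
  "lvar_inv i = Poly_Mapping.single (Poly_Mapping.single i (-1)) 1"

definition CT :: "laurent \<Rightarrow> int" where
  "CT p = Poly_Mapping.lookup p 0"

end

theory Submission
  imports Defs "HOL-Computational_Algebra.Fraction_Field"
begin

definition Lam :: "(nat \<Rightarrow> 'f::field) \<Rightarrow> nat set \<Rightarrow> nat \<Rightarrow> 'f" where
  "Lam x S m = (\<Sum>k\<in>S. x k ^ m / (\<Prod>i\<in>S-{k}. (x k - x i)))"

lemma Lam_rec: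
  assumes "finite S" "r \<in> S" "inj_on x S"
  shows "Lam x S (Suc m) - x r * Lam x S m = Lam x (S-{r}) m"
proof -
  have "Lam x S (Suc m) - x r * Lam x S m = (\<Sum>k\<in>S. x k ^ m * (x k - x r) / (\<Prod>i\<in>S-{k}. (x k - x i)))"
    unfolding Lam_def by (simp add: sum_distrib_left sum_subtractf[symmetric] algebra_simps diff_divide_distrib)
  also have "\<dots> = (\<Sum>k\<in>S-{r}. x k ^ m * (x k - x r) / (\<Prod>i\<in>S-{k}. (x k - x i)))"
    using assms by (subst sum.remove[of S r]) auto
  also have "\<dots> = (\<Sum>k\<in>S-{r}. x k ^ m / (\<Prod>i\<in>S-{r}-{k}. (x k - x i)))"
  proof (rule sum.cong[OF refl])
    fix k assume k: "k \<in> S - {r}"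
    have "S - {k} = insert r (S - {r} - {k})" using k assms by auto
    hence "(\<Prod>i\<in>S-{k}. (x k - x i)) = (x k - x r) * (\<Prod>i\<in>S-{r}-{k}. (x k - x i))"
      using assms by (simp add: prod.insert)
    moreover have "x k - x r \<noteq> 0" using k assms by (auto simp: inj_on_def)
    ultimately show "x k ^ m * (x k - x r) / (\<Prod>i\<in>S-{k}. (x k - x i)) = x k ^ m / (\<Prod>i\<in>S-{r}-{k}. (x k - x i))"
      by simp
  qed
  finally show ?thesis unfolding Lam_def .
qed

lemma Lam_main:
  "finite S \<Longrightarrow> S \<noteq> {} \<Longrightarrow> inj_on x S \<Longrightarrow> Lam x S (card S - 1) = 1 \<and> Lam x S (card S) = sum x S"
proof (induction "card S" arbitrary: S rule: less_induct)
  case less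
  show ?case
  proof (cases "card S = 1")
    case True
    then obtain k where "S = {k}" by (auto simp: card_Suc_eq)
    thus ?thesis by (simp add: Lam_def)
  next
    case False
    with less.prems have "card S \<ge> 2"
      by (metis One_nat_def Suc_1 Suc_leI card_gt_0_iff le_neq_implies_less less_one not_less_eq_eq)
    obtain r where r: "r \<in> S" using less.prems by auto
    have "card (S - {r}) \<ge> 1" using r less.prems \<open>card S \<ge> 2\<close> by simp
    then obtain q where q: "q \<in> S - {r}"
      by (metis One_nat_def all_not_in_conv card.empty not_less_eq_eq zero_le)
    have rq: "r \<in> S" "q \<in> S" "r \<noteq> q" using r q by auto
    define m where "m = card S - 1"
    have cr: "card (S - {r}) = m" "card (S - {q}) = m" using rq less.prems m_def by auto
    have ne: "S - {r} \<noteq> {}" "S - {q} \<noteq> {}" using rq by auto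
    have IHr: "Lam x (S-{r}) m = sum x (S-{r})"
    proof -
      have "card (S-{r}) < card S" using cr m_def \<open>card S \<ge> 2\<close> by simp
      moreover have "inj_on x (S-{r})" using less.prems by (auto intro: inj_on_subset)
      ultimately show ?thesis using less.hyps[of "S-{r}"] cr ne less.prems by auto
    qed
    have IHq: "Lam x (S-{q}) m = sum x (S-{q})"
    proof -
      have "card (S-{q}) < card S" using cr m_def \<open>card S \<ge> 2\<close> by simp
      moreover have "inj_on x (S-{q})" using less.prems by (auto intro: inj_on_subset)
      ultimately show ?thesis using less.hyps[of "S-{q}"] cr ne less.prems by auto
    qed
    have e1: "Lam x S (Suc m) - x r * Lam x S m = sum x (S-{r})"
      using Lam_rec[of S r x m] less.prems rq IHr by simp
    have e2: "Lam x S (Suc m) - x q * Lam x S m = sum x (S-{q})"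
      using Lam_rec[of S q x m] less.prems rq IHq by simp
    have sr: "sum x S = x r + sum x (S-{r})" "sum x S = x q + sum x (S-{q})"
      using sum.remove[OF less.prems(1) rq(1)] sum.remove[OF less.prems(1) rq(2)] by simp_all
    have "x q * Lam x S m - x r * Lam x S m = sum x (S-{r}) - sum x (S-{q})"
      unfolding e1[symmetric] e2[symmetric] by (simp add: algebra_simps)
    also have "\<dots> = x q - x r" using sr by (simp add: algebra_simps)
    finally have "(x q - x r) * Lam x S m = x q - x r" by (simp add: algebra_simps)
    moreover have "x q - x r \<noteq> 0" using rq less.prems by (auto simp: inj_on_def)
    ultimately have L1: "Lam x S m = 1" by simp
    have "Lam x S (Suc m) = sum x S" using e1 L1 sr(1) by (simp add: algebra_simps)
    moreover have "Suc m = card S" using m_def \<open>card S \<ge> 2\<close> by simp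
    ultimately show ?thesis using L1 m_def by simp
  qed
qed

lemma field_inv_sum:
  fixes x :: "nat \<Rightarrow> 'f::field"
  assumes "finite S" "S \<noteq> {}" "inj_on x S" "\<forall>i\<in>S. x i \<noteq> 0" "sum x S \<noteq> 0"
  shows "(\<Sum>j\<in>S. inverse (sum x S * inverse (x j) * (\<Prod>i\<in>S-{j}. (1 - x i * inverse (x j))))) = 1"
proof -
  have eq: "inverse (sum x S * inverse (x j) * (\<Prod>i\<in>S-{j}. (1 - x i * inverse (x j))))
        = x j ^ card S / (\<Prod>i\<in>S-{j}. (x j - x i)) / sum x S" if j: "j \<in> S" for j
  proof -
    have xj: "x j \<noteq> 0" using j assms by auto
    have "(\<Prod>i\<in>S-{j}. (1 - x i * inverse (x j))) = (\<Prod>i\<in>S-{j}. (x j - x i) / x j)"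
    proof (rule prod.cong[OF refl])
      fix i
      have "(x j - x i) / x j = x j / x j - x i / x j" by (rule diff_divide_distrib)
      also have "x j / x j = 1" using xj by simp
      also have "x i / x j = x i * inverse (x j)" by (rule divide_inverse)
      finally show "1 - x i * inverse (x j) = (x j - x i) / x j" by simp
    qed
    also have "\<dots> = (\<Prod>i\<in>S-{j}. (x j - x i)) / x j ^ (card S - 1)"
      using assms j by (simp add: prod_dividef)
    finally have p: "(\<Prod>i\<in>S-{j}. (1 - x i * inverse (x j))) = (\<Prod>i\<in>S-{j}. (x j - x i)) / x j ^ (card S - 1)" .
    have "card S > 0" using assms j by (auto simp: card_gt_0_iff)
    hence cs: "card S = Suc (card S - 1)" by simp
    have "x j ^ card S = x j * x j ^ (card S - 1)" by (subst cs) simp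
    thus ?thesis unfolding p using xj by (simp add: inverse_mult_distrib divide_inverse mult_ac)
  qed
  have "(\<Sum>j\<in>S. inverse (sum x S * inverse (x j) * (\<Prod>i\<in>S-{j}. (1 - x i * inverse (x j)))))
      = (\<Sum>j\<in>S. x j ^ card S / (\<Prod>i\<in>S-{j}. (x j - x i)) / sum x S)"
    using eq by (rule sum.cong[OF refl])
  also have "\<dots> = Lam x S (card S) / sum x S" unfolding Lam_def by (simp add: sum_divide_distrib)
  also have "\<dots> = 1" using Lam_main[OF assms(1-3)] assms(5) by simp
  finally show ?thesis .
qed

lemma prod_upd:
  fixes g :: "nat \<Rightarrow> 'b::comm_monoid_mult"
  assumes "finite S" "k \<in> S"
  shows "(\<Prod>j\<in>S. g ((a(k:=v)) j)) = g v * (\<Prod>j\<in>S-{k}. g (a j))"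
  using assms by (simp add: prod.remove)

lemma sum_upd:
  fixes g :: "nat \<Rightarrow> 'b::comm_monoid_add"
  assumes "finite S" "k \<in> S"
  shows "(\<Sum>j\<in>S. g ((a(k:=v)) j)) = g v + (\<Sum>j\<in>S-{k}. g (a j))"
  using assms by (simp add: sum.remove)

lemma field_rec:
  fixes L :: "nat \<Rightarrow> 'f::field"
  assumes "finite S" "\<forall>j\<in>S. L j \<noteq> 0" "(\<Sum>j\<in>S. inverse (L j)) = 1" "\<forall>j\<in>S. a j \<ge> 1"
  shows "(\<Prod>j\<in>S. L j ^ a j) = (\<Sum>k\<in>S. \<Prod>j\<in>S. L j ^ (a(k := a k - 1)) j)"
proof -
  have "(\<Prod>j\<in>S. L j ^ (a(k := a k - 1)) j) = (\<Prod>j\<in>S. L j ^ a j) * inverse (L k)" if k: "k \<in> S" for k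
  proof -
    have "(\<Prod>j\<in>S. L j ^ (a(k := a k - 1)) j) = L k ^ (a k - 1) * (\<Prod>j\<in>S-{k}. L j ^ a j)"
      using assms(1) k by (simp add: prod.remove)
    moreover have "(\<Prod>j\<in>S. L j ^ a j) = L k ^ a k * (\<Prod>j\<in>S-{k}. L j ^ a j)"
      using assms(1) k by (simp add: prod.remove)
    moreover have "L k ^ a k = L k * L k ^ (a k - 1)"
    proof -
      have "a k = Suc (a k - 1)" using assms(4) k by auto
      thus ?thesis by (metis power_Suc)
    qed
    moreover have "L k \<noteq> 0" using assms k by auto
    ultimately show ?thesis by (simp add: field_simps)
  qed
  hence "(\<Sum>k\<in>S. \<Prod>j\<in>S. L j ^ (a(k := a k - 1)) j) = (\<Sum>k\<in>S. (\<Prod>j\<in>S. L j ^ a j) * inverse (L k))"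
    by (rule sum.cong[OF refl])
  also have "\<dots> = (\<Prod>j\<in>S. L j ^ a j)" using assms(3) by (simp add: sum_distrib_left[symmetric])
  finally show ?thesis by simp
qed

lemma multinom_rec:
  fixes a :: "nat \<Rightarrow> nat"
  assumes "finite S" "S \<noteq> {}" "\<forall>j\<in>S. a j \<ge> 1"
  shows "(fact (sum a S) / (\<Prod>j\<in>S. fact (a j)) :: real)
     = (\<Sum>k\<in>S. fact (sum (a(k := a k - 1)) S) / (\<Prod>j\<in>S. fact ((a(k := a k - 1)) j)))"
proof -
  define N where "N = sum a S"
  define P where "P = (\<Prod>j\<in>S. fact (a j) :: real)"
  have P0: "P \<noteq> 0" unfolding P_def by (simp add: prod_zero_iff assms(1))
  obtain k0 where k0: "k0 \<in> S" using assms by auto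
  have "a k0 \<le> sum a S" by (rule member_le_sum) (use assms k0 in auto)
  hence N1: "N \<ge> 1" using assms k0 unfolding N_def by force
  have tm: "fact (sum (a(k := a k - 1)) S) / (\<Prod>j\<in>S. fact ((a(k := a k - 1)) j)) = fact (N - 1) * real (a k) / P"
    if k: "k \<in> S" for k
  proof -
    have s1: "sum (a(k := a k - 1)) S = a k - 1 + sum a (S - {k})"
      using sum_upd[OF assms(1) k, of id a] by simp
    have s2: "N = a k + sum a (S - {k})" unfolding N_def using assms(1) k by (simp add: sum.remove)
    have ak: "a k \<ge> 1" using assms k by auto
    have s: "sum (a(k := a k - 1)) S = N - 1" using s1 s2 ak by simp
    have p1: "(\<Prod>j\<in>S. fact ((a(k := a k - 1)) j) :: real) = fact (a k - 1) * (\<Prod>j\<in>S-{k}. fact (a j))"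
      using prod_upd[OF assms(1) k, of "\<lambda>v. fact v :: real" a] by simp
    have p2: "P = fact (a k) * (\<Prod>j\<in>S-{k}. fact (a j))" unfolding P_def using assms(1) k by (simp add: prod.remove)
    have fk: "(fact (a k) :: real) = real (a k) * fact (a k - 1)"
      using ak by (simp add: fact_reduce)
    have q: "(\<Prod>j\<in>S-{k}. fact (a j) :: real) \<noteq> 0" by (simp add: prod_zero_iff assms(1))
    show ?thesis unfolding s p1 using p2 fk q ak by (simp add: field_simps)
  qed
  have "(\<Sum>k\<in>S. fact (sum (a(k := a k - 1)) S) / (\<Prod>j\<in>S. fact ((a(k := a k - 1)) j)))
      = (\<Sum>k\<in>S. fact (N - 1) * real (a k) / P)" using tm by (rule sum.cong[OF refl])
  also have "\<dots> = fact (N - 1) * real N / P" unfolding N_def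
    by (simp add: sum_divide_distrib[symmetric] sum_distrib_left[symmetric])
  also have "\<dots> = fact N / P" using N1 fact_reduce[of N, where 'a=real] by (simp add: mult.commute)
  finally show ?thesis unfolding N_def P_def by simp
qed

definition NN :: "nat \<Rightarrow> laurent \<Rightarrow> bool" where
  "NN k p \<longleftrightarrow> (\<forall>m\<in>Poly_Mapping.keys p. Poly_Mapping.lookup m k \<ge> 0)"
definition PS :: "nat \<Rightarrow> laurent \<Rightarrow> bool" where
  "PS k p \<longleftrightarrow> (\<forall>m\<in>Poly_Mapping.keys p. Poly_Mapping.lookup m k > 0)"

lemma PS_CT: "PS k p \<Longrightarrow> CT p = 0"
proof (rule ccontr)
  assume a: "PS k p" "CT p \<noteq> 0"
  hence "0 \<in> Poly_Mapping.keys p" by (simp add: CT_def in_keys_iff)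
  with a(1) show False unfolding PS_def by fastforce
qed

lemma PS_NN: "PS k p \<Longrightarrow> NN k p"
  unfolding PS_def NN_def by force

lemma NN_add: "NN k p \<Longrightarrow> NN k q \<Longrightarrow> NN k (p + q)"
  unfolding NN_def using keys_add[of p q] by (meson Un_iff subsetD)
lemma PS_add: "PS k p \<Longrightarrow> PS k q \<Longrightarrow> PS k (p + q)"
  unfolding PS_def using keys_add[of p q] by (meson Un_iff subsetD)
lemma NN_uminus: "NN k p \<Longrightarrow> NN k (- p)"
  unfolding NN_def by simp
lemma PS_uminus: "PS k p \<Longrightarrow> PS k (- p)"
  unfolding PS_def by simp
lemma NN_diff: "NN k p \<Longrightarrow> NN k q \<Longrightarrow> NN k (p - q)"
  unfolding diff_conv_add_uminus by (intro NN_add NN_uminus)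
lemma PS_diff: "PS k p \<Longrightarrow> PS k q \<Longrightarrow> PS k (p - q)"
  unfolding diff_conv_add_uminus by (intro PS_add PS_uminus)
lemma PS_zero: "PS k 0" unfolding PS_def by simp
lemma NN_one: "NN k 1" unfolding NN_def by simp

lemma NN_mult: "NN k p \<Longrightarrow> NN k q \<Longrightarrow> NN k (p * q)"
  unfolding NN_def
proof
  fix m assume p: "\<forall>m\<in>Poly_Mapping.keys p. 0 \<le> Poly_Mapping.lookup m k" and q: "\<forall>m\<in>Poly_Mapping.keys q. 0 \<le> Poly_Mapping.lookup m k"
    and m: "m \<in> Poly_Mapping.keys (p * q)"
  then obtain a b where "m = a + b" "a \<in> Poly_Mapping.keys p" "b \<in> Poly_Mapping.keys q" using keys_mult by blast
  thus "0 \<le> Poly_Mapping.lookup m k" using p q by (simp add: lookup_add)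
qed

lemma PS_mult: "NN k p \<Longrightarrow> PS k q \<Longrightarrow> PS k (p * q)"
  unfolding NN_def PS_def
proof
  fix m assume p: "\<forall>m\<in>Poly_Mapping.keys p. 0 \<le> Poly_Mapping.lookup m k" and q: "\<forall>m\<in>Poly_Mapping.keys q. 0 < Poly_Mapping.lookup m k"
    and m: "m \<in> Poly_Mapping.keys (p * q)"
  then obtain a b where "m = a + b" "a \<in> Poly_Mapping.keys p" "b \<in> Poly_Mapping.keys q" using keys_mult by blast
  thus "0 < Poly_Mapping.lookup m k" using p q by (simp add: lookup_add add_nonneg_pos)
qed

lemma NN_power: "NN k p \<Longrightarrow> NN k (p ^ n)"
  by (induction n) (auto intro: NN_mult NN_one)

lemma NN_prod: "(\<And>i. i \<in> A \<Longrightarrow> NN k (f i)) \<Longrightarrow> NN k (prod f A)"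
  by (induction A rule: infinite_finite_induct) (auto intro: NN_mult NN_one)

lemma NN_sum: "(\<And>i. i \<in> A \<Longrightarrow> NN k (f i)) \<Longrightarrow> NN k (sum f A)"
  by (induction A rule: infinite_finite_induct) (auto intro!: NN_add simp: NN_def[of k 0])

definition EQK :: "nat \<Rightarrow> laurent \<Rightarrow> laurent \<Rightarrow> bool" where
  "EQK k p q \<longleftrightarrow> NN k p \<and> NN k q \<and> PS k (p - q)"

lemma EQK_refl: "NN k p \<Longrightarrow> EQK k p p"
  unfolding EQK_def by (simp add: PS_zero)

lemma EQK_mult: "EQK k p q \<Longrightarrow> EQK k p' q' \<Longrightarrow> EQK k (p * p') (q * q')"
proof -
  assume a: "EQK k p q" "EQK k p' q'"
  have "p * p' - q * q' = p * (p' - q') + q' * (p - q)" by (simp add: algebra_simps)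
  moreover have "PS k (p * (p' - q') + q' * (p - q))"
    using a unfolding EQK_def by (intro PS_add PS_mult) auto
  ultimately show ?thesis using a unfolding EQK_def by (auto intro: NN_mult)
qed

lemma EQK_power: "EQK k p q \<Longrightarrow> EQK k (p ^ n) (q ^ n)"
  by (induction n) (auto intro: EQK_mult EQK_refl NN_one)

lemma EQK_prod: "(\<And>i. i \<in> A \<Longrightarrow> EQK k (f i) (g i)) \<Longrightarrow> EQK k (prod f A) (prod g A)"
  by (induction A rule: infinite_finite_induct) (auto intro: EQK_mult EQK_refl NN_one)

lemma EQK_CT: "EQK k p q \<Longrightarrow> CT p = CT q"
proof -
  assume "EQK k p q"
  hence "CT (p - q) = 0" unfolding EQK_def by (auto intro: PS_CT)
  thus ?thesis unfolding CT_def by (simp add: lookup_minus)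
qed

lemma lvar_mult_inv: "lvar i * lvar_inv j = Poly_Mapping.single (Poly_Mapping.single i 1 + Poly_Mapping.single j (-1)) 1"
  unfolding lvar_def lvar_inv_def by (simp add: mult_single)

lemma lvar_inv_cancel: "lvar i * lvar_inv i = 1"
  unfolding lvar_mult_inv by (simp add: single_add[symmetric])

lemma NN_lvar: "NN k (lvar i)"
  unfolding NN_def lvar_def by (simp add: lookup_single)

lemma PS_lvar: "PS k (lvar k)"
  unfolding PS_def lvar_def by simp

lemma NN_lvar_inv: "j \<noteq> k \<Longrightarrow> NN k (lvar_inv j)"
  unfolding NN_def lvar_inv_def by (simp add: lookup_single)

lemma PS_lvar_mult_inv: "j \<noteq> k \<Longrightarrow> PS k (lvar k * lvar_inv j)"
  unfolding lvar_mult_inv PS_def by (simp add: lookup_add lookup_single)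

definition Fs :: "nat set \<Rightarrow> (nat \<Rightarrow> nat) \<Rightarrow> laurent" where
  "Fs S a = (\<Sum>i\<in>S. lvar i) ^ (\<Sum>i\<in>S. a i) * (\<Prod>i\<in>S. lvar_inv i ^ a i)
            * (\<Prod>i\<in>S. \<Prod>j\<in>S - {i}. (1 - lvar i * lvar_inv j) ^ a j)"

definition Lj :: "nat set \<Rightarrow> nat \<Rightarrow> laurent" where
  "Lj S j = (\<Sum>i\<in>S. lvar i) * lvar_inv j * (\<Prod>i\<in>S - {j}. (1 - lvar i * lvar_inv j))"

lemma prod_swap_offdiag:
  fixes S :: "nat set" and f :: "nat \<Rightarrow> nat \<Rightarrow> 'b::comm_monoid_mult"
  assumes "finite S"
  shows "(\<Prod>i\<in>S. \<Prod>j\<in>S - {i}. f i j) = (\<Prod>j\<in>S. \<Prod>i\<in>S - {j}. (f i j :: 'b::comm_monoid_mult))"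
proof -
  have e: "(\<Prod>j\<in>S - {i}. g j) = (\<Prod>j\<in>S. if j = i then 1 else g j)" for i and g :: "nat \<Rightarrow> 'b"
    using assms by (intro prod.mono_neutral_cong_left) auto
  have "(\<Prod>i\<in>S. \<Prod>j\<in>S - {i}. f i j) = (\<Prod>i\<in>S. \<Prod>j\<in>S. if j = i then 1 else f i j)"
    by (simp add: e)
  also have "\<dots> = (\<Prod>j\<in>S. \<Prod>i\<in>S. if j = i then 1 else f i j)" by (rule prod.swap)
  also have "\<dots> = (\<Prod>j\<in>S. \<Prod>i\<in>S - {j}. f i j)"
    by (intro prod.cong[OF refl]) (simp add: e eq_commute)
  finally show ?thesis .
qed

lemma Fs_prod:
  assumes "finite S"
  shows "Fs S a = (\<Prod>j\<in>S. Lj S j ^ a j)"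
proof -
  have "(\<Prod>i\<in>S. \<Prod>j\<in>S - {i}. (1 - lvar i * lvar_inv j) ^ a j)
      = (\<Prod>j\<in>S. \<Prod>i\<in>S - {j}. (1 - lvar i * lvar_inv j) ^ a j)"
    by (rule prod_swap_offdiag[OF assms])
  also have "\<dots> = (\<Prod>j\<in>S. (\<Prod>i\<in>S - {j}. (1 - lvar i * lvar_inv j)) ^ a j)"
    by (simp add: prod_power_distrib)
  finally have c: "(\<Prod>i\<in>S. \<Prod>j\<in>S - {i}. (1 - lvar i * lvar_inv j) ^ a j)
      = (\<Prod>j\<in>S. (\<Prod>i\<in>S - {j}. (1 - lvar i * lvar_inv j)) ^ a j)" .
  have p: "(\<Sum>i\<in>S. lvar i) ^ (\<Sum>i\<in>S. a i) = (\<Prod>j\<in>S. (\<Sum>i\<in>S. lvar i) ^ a j)"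
    by (rule power_sum)
  show ?thesis unfolding Fs_def Lj_def c p
    by (simp add: prod.distrib[symmetric] power_mult_distrib)
qed

lemma Fs_reduce:
  assumes "finite S" "k \<in> S" "a k = 0"
  shows "CT (Fs S a) = CT (Fs (S - {k}) a)"
proof -
  define T where "T = S - {k}"
  define f where "f i j = (1 - lvar i * lvar_inv j) ^ a j" for i j
  have fT: "finite T" using assms unfolding T_def by simp
  have sumS: "(\<Sum>i\<in>S. lvar i) = lvar k + (\<Sum>i\<in>T. lvar i)"
    unfolding T_def using sum.remove[OF assms(1,2)] .
  have Na: "sum a S = sum a T" unfolding T_def using sum.remove[OF assms(1,2), of a] assms(3) by simp
  have B: "(\<Prod>i\<in>S. lvar_inv i ^ a i) = (\<Prod>i\<in>T. lvar_inv i ^ a i)"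
    unfolding T_def using prod.remove[OF assms(1,2), of "\<lambda>i. lvar_inv i ^ a i"] assms(3) by simp
  have C: "(\<Prod>i\<in>S. \<Prod>j\<in>S-{i}. f i j) = (\<Prod>j\<in>T. f k j) * (\<Prod>i\<in>T. \<Prod>j\<in>T-{i}. f i j)"
  proof -
    have "(\<Prod>i\<in>S. \<Prod>j\<in>S-{i}. f i j) = (\<Prod>j\<in>S-{k}. f k j) * (\<Prod>i\<in>T. \<Prod>j\<in>S-{i}. f i j)"
      unfolding T_def using prod.remove[OF assms(1,2)] .
    also have "(\<Prod>i\<in>T. \<Prod>j\<in>S-{i}. f i j) = (\<Prod>i\<in>T. \<Prod>j\<in>T-{i}. f i j)"
    proof (rule prod.cong[OF refl])
      fix i assume i: "i \<in> T"
      have "S - {i} = insert k (T - {i})" using i assms unfolding T_def by auto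
      moreover have "k \<notin> T - {i}" unfolding T_def by simp
      moreover have "f i k = 1" unfolding f_def using assms(3) by simp
      ultimately show "(\<Prod>j\<in>S-{i}. f i j) = (\<Prod>j\<in>T-{i}. f i j)" using fT by simp
    qed
    finally show ?thesis unfolding T_def .
  qed
  have NNT: "NN k (lvar i * lvar_inv j)" if "j \<in> T" for i j
    using that unfolding T_def by (intro NN_mult NN_lvar NN_lvar_inv) auto
  have E1: "EQK k ((\<Sum>i\<in>S. lvar i) ^ sum a S) ((\<Sum>i\<in>T. lvar i) ^ sum a T)"
  proof -
    have n1: "NN k (\<Sum>i\<in>T. lvar i)" by (intro NN_sum NN_lvar)
    have "EQK k (lvar k + (\<Sum>i\<in>T. lvar i)) (\<Sum>i\<in>T. lvar i)"
      unfolding EQK_def using n1 by (auto intro: NN_add NN_lvar PS_lvar)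
    thus ?thesis unfolding sumS Na by (rule EQK_power)
  qed
  have E2: "EQK k (\<Prod>i\<in>T. lvar_inv i ^ a i) (\<Prod>i\<in>T. lvar_inv i ^ a i)"
    by (intro EQK_refl NN_prod NN_power NN_lvar_inv) (auto simp: T_def)
  have E3: "EQK k (\<Prod>j\<in>T. f k j) (\<Prod>j\<in>T. 1)"
  proof (rule EQK_prod)
    fix j assume j: "j \<in> T"
    have "EQK k (1 - lvar k * lvar_inv j) 1"
    proof -
      have jk: "j \<noteq> k" using j unfolding T_def by simp
      have "(1 - lvar k * lvar_inv j) - 1 = - (lvar k * lvar_inv j)" by simp
      hence "PS k ((1 - lvar k * lvar_inv j) - 1)" using PS_uminus[OF PS_lvar_mult_inv[OF jk]] by simp
      moreover have "NN k (1 - lvar k * lvar_inv j)"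
        using NN_diff[OF NN_one PS_NN[OF PS_lvar_mult_inv[OF jk]]] .
      ultimately show ?thesis unfolding EQK_def using NN_one by simp
    qed
    from EQK_power[OF this, of "a j"] show "EQK k (f k j) 1" unfolding f_def by simp
  qed
  have E4: "EQK k (\<Prod>i\<in>T. \<Prod>j\<in>T-{i}. f i j) (\<Prod>i\<in>T. \<Prod>j\<in>T-{i}. f i j)"
    unfolding f_def by (intro EQK_refl NN_prod NN_power NN_diff NN_one NNT) auto
  have "EQK k (Fs S a) (Fs T a)"
  proof -
    have "Fs S a = (\<Sum>i\<in>S. lvar i) ^ sum a S * (\<Prod>i\<in>T. lvar_inv i ^ a i)
        * ((\<Prod>j\<in>T. f k j) * (\<Prod>i\<in>T. \<Prod>j\<in>T-{i}. f i j))"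
      using C unfolding Fs_def B f_def by simp
    moreover have "Fs T a = (\<Sum>i\<in>T. lvar i) ^ sum a T * (\<Prod>i\<in>T. lvar_inv i ^ a i)
        * ((\<Prod>j\<in>T. 1) * (\<Prod>i\<in>T. \<Prod>j\<in>T-{i}. f i j))"
      unfolding Fs_def f_def by simp
    ultimately show ?thesis using E1 E2 E3 E4 by (simp only:) (intro EQK_mult)
  qed
  thus ?thesis unfolding T_def by (rule EQK_CT)
qed

definition iota :: "laurent \<Rightarrow> laurent fract" where "iota x = Fract x 1"

lemma iota_add: "iota (x + y) = iota x + iota y" unfolding iota_def by simp
lemma iota_mult: "iota (x * y) = iota x * iota y" unfolding iota_def by simp
lemma iota_diff: "iota (x - y) = iota x - iota y" unfolding iota_def by simp
lemma iota_one: "iota 1 = 1" unfolding iota_def by (simp add: One_fract_def)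
lemma iota_zero: "iota 0 = 0" unfolding iota_def by (simp add: Zero_fract_def)
lemma iota_power: "iota (x ^ n) = iota x ^ n"
  by (induction n) (simp_all add: iota_one iota_mult)
lemma iota_prod: "iota (prod f A) = (\<Prod>i\<in>A. iota (f i))"
  by (induction A rule: infinite_finite_induct) (simp_all add: iota_one iota_mult)
lemma iota_sum: "iota (sum f A) = (\<Sum>i\<in>A. iota (f i))"
  by (induction A rule: infinite_finite_induct) (simp_all add: iota_zero iota_add)
lemma iota_inj: "iota x = iota y \<Longrightarrow> x = y"
  unfolding iota_def by (simp add: eq_fract)
lemma iota_ne0: "x \<noteq> 0 \<Longrightarrow> iota x \<noteq> 0"
  using iota_inj iota_zero by metis

lemma single_one_inj: "Poly_Mapping.single j (1::int) = Poly_Mapping.single i 1 \<Longrightarrow> j = i"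
  by (drule arg_cong[where f="\<lambda>m. Poly_Mapping.lookup m i"]) (simp add: lookup_single when_def split: if_splits)

lemma lookup_lvar: "Poly_Mapping.lookup (lvar j) (Poly_Mapping.single i 1) = (if j = i then 1 else 0)"
  unfolding lvar_def by (auto simp: lookup_single when_def dest: single_one_inj)

lemma lvar_ne0: "lvar i \<noteq> 0"
proof
  assume "lvar i = 0"
  hence "Poly_Mapping.lookup (lvar i) (Poly_Mapping.single i 1) = 0" by simp
  thus False by (simp add: lookup_lvar)
qed

lemma lvar_inj: "lvar i = lvar j \<Longrightarrow> i = j"
proof -
  assume "lvar i = lvar j"
  hence "Poly_Mapping.lookup (lvar i) (Poly_Mapping.single i 1) = Poly_Mapping.lookup (lvar j) (Poly_Mapping.single i 1)" by simp
  thus ?thesis by (simp add: lookup_lvar split: if_splits)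
qed

lemma sum_lvar_ne0:
  assumes "finite S" "i \<in> S"
  shows "(\<Sum>j\<in>S. lvar j) \<noteq> 0"
proof
  assume "(\<Sum>j\<in>S. lvar j) = 0"
  hence "Poly_Mapping.lookup (\<Sum>j\<in>S. lvar j) (Poly_Mapping.single i 1) = 0" by simp
  moreover have "Poly_Mapping.lookup (\<Sum>j\<in>S. lvar j) (Poly_Mapping.single i 1) = 1"
    using assms by (simp add: lookup_sum lookup_lvar)
  ultimately show False by simp
qed

lemma iota_lvar_inv: "iota (lvar_inv j) = inverse (iota (lvar j))"
proof -
  have "iota (lvar j) * iota (lvar_inv j) = 1" using lvar_inv_cancel[of j] by (simp add: iota_mult[symmetric] iota_one)
  thus ?thesis by (simp add: inverse_unique)
qed

lemma Fs_rec:
  assumes "finite S" "S \<noteq> {}" "\<forall>j\<in>S. a j \<ge> 1"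
  shows "Fs S a = (\<Sum>k\<in>S. Fs S (a(k := a k - 1)))"
proof -
  define x where "x i = iota (lvar i)" for i
  define L where "L j = iota (Lj S j)" for j
  have x0: "\<forall>i\<in>S. x i \<noteq> 0" unfolding x_def using lvar_ne0 iota_ne0 by auto
  have xinj: "inj_on x S" unfolding x_def inj_on_def using iota_inj lvar_inj by blast
  have s0: "sum x S \<noteq> 0"
  proof -
    obtain i where "i \<in> S" using assms by auto
    hence "(\<Sum>j\<in>S. lvar j) \<noteq> 0" using sum_lvar_ne0 assms by blast
    thus ?thesis unfolding x_def using iota_ne0 iota_sum by metis
  qed
  have Lx: "L j = sum x S * inverse (x j) * (\<Prod>i\<in>S-{j}. (1 - x i * inverse (x j)))" for j
    unfolding L_def Lj_def x_def by (simp add: iota_mult iota_sum iota_prod iota_diff iota_one iota_lvar_inv)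
  have L0: "\<forall>j\<in>S. L j \<noteq> 0"
  proof
    fix j assume j: "j \<in> S"
    have "(\<Prod>i\<in>S-{j}. (1 - x i * inverse (x j))) \<noteq> 0"
    proof -
      have "1 - x i * inverse (x j) \<noteq> 0" if "i \<in> S - {j}" for i
      proof
        assume "1 - x i * inverse (x j) = 0"
        hence "x i * inverse (x j) = 1" by simp
        hence "x i = x j" using x0 j by (simp add: field_simps)
        thus False using xinj that j by (auto simp: inj_on_def)
      qed
      thus ?thesis using assms(1) by (simp add: prod_zero_iff)
    qed
    thus "L j \<noteq> 0" unfolding Lx using s0 x0 j by simp
  qed
  have Linv: "(\<Sum>j\<in>S. inverse (L j)) = 1"
    unfolding Lx by (rule field_inv_sum[OF assms(1,2) xinj x0 s0])
  have "iota (Fs S a) = (\<Prod>j\<in>S. L j ^ a j)"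
    unfolding Fs_prod[OF assms(1)] L_def by (simp add: iota_prod iota_power)
  also have "\<dots> = (\<Sum>k\<in>S. \<Prod>j\<in>S. L j ^ (a(k := a k - 1)) j)"
    by (rule field_rec[OF assms(1) L0 Linv assms(3)])
  also have "\<dots> = iota (\<Sum>k\<in>S. Fs S (a(k := a k - 1)))"
    unfolding iota_sum Fs_prod[OF assms(1)] L_def by (simp add: iota_prod iota_power)
  finally show ?thesis by (rule iota_inj)
qed

lemma CT_sum: "CT (sum f A) = (\<Sum>i\<in>A. CT (f i))"
  unfolding CT_def by (simp add: lookup_sum)

lemma main_gen:
  "finite S \<Longrightarrow> real_of_int (CT (Fs S a)) = fact (\<Sum>i\<in>S. a i) / (\<Prod>i\<in>S. fact (a i))"
proof (induction "card S + sum a S" arbitrary: S a rule: less_induct)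
  case less
  show ?case
  proof (cases "S = {}")
    case True
    thus ?thesis unfolding Fs_def CT_def by simp
  next
    case ne: False
    show ?thesis
    proof (cases "\<exists>k\<in>S. a k = 0")
      case True
      then obtain k where k: "k \<in> S" "a k = 0" by auto
      have sa: "sum a (S - {k}) = sum a S" using sum.remove[OF less.prems k(1), of a] k by simp
      have pa: "(\<Prod>i\<in>S - {k}. fact (a i) :: real) = (\<Prod>i\<in>S. fact (a i))"
        using prod.remove[OF less.prems k(1), of "\<lambda>i. fact (a i) :: real"] k by simp
      have cs: "card (S - {k}) < card S" using card_Diff1_less[OF less.prems k(1)] by simp
      have "real_of_int (CT (Fs S a)) = real_of_int (CT (Fs (S - {k}) a))"
        using Fs_reduce[of S k a] less.prems k by simp
      also have "\<dots> = fact (\<Sum>i\<in>S-{k}. a i) / (\<Prod>i\<in>S-{k}. fact (a i))"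
        using less.hyps[of "S - {k}" a] cs sa less.prems by simp
      finally show ?thesis using sa pa by simp
    next
      case False
      hence all: "\<forall>j\<in>S. a j \<ge> 1" by (auto simp: Suc_le_eq)
      have IH: "real_of_int (CT (Fs S (a(k := a k - 1)))) =
          fact (sum (a(k := a k - 1)) S) / (\<Prod>j\<in>S. fact ((a(k := a k - 1)) j))" if k: "k \<in> S" for k
      proof -
        have "sum (a(k := a k - 1)) S = a k - 1 + sum a (S - {k})"
          using sum_upd[OF less.prems k, of id a] by simp
        moreover have "sum a S = a k + sum a (S - {k})" using sum.remove[OF less.prems k] by simp
        moreover have "a k \<ge> 1" using all k by auto
        ultimately have "sum (a(k := a k - 1)) S < sum a S" by simp
        thus ?thesis using less.hyps[of S "a(k := a k - 1)"] less.prems by simp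
      qed
      have "real_of_int (CT (Fs S a)) = (\<Sum>k\<in>S. real_of_int (CT (Fs S (a(k := a k - 1)))))"
        by (subst Fs_rec[OF less.prems ne all]) (simp add: CT_sum)
      also have "\<dots> = (\<Sum>k\<in>S. fact (sum (a(k := a k - 1)) S) / (\<Prod>j\<in>S. fact ((a(k := a k - 1)) j)))"
        using IH by (rule sum.cong[OF refl])
      also have "\<dots> = fact (sum a S) / (\<Prod>j\<in>S. fact (a j))"
        by (rule multinom_rec[OF less.prems ne all, symmetric])
      finally show ?thesis by simp
    qed
  qed
qed

theorem mainTheorem18:
  fixes n :: nat and a :: "nat \<Rightarrow> nat"
  assumes "n \<ge> 1"
  shows "real_of_int (CT ((\<Sum>i\<in>{1..n}. lvar i) ^ (\<Sum>i\<in>{1..n}. a i)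
            * (\<Prod>i\<in>{1..n}. lvar_inv i ^ a i)
            * (\<Prod>i\<in>{1..n}. \<Prod>j\<in>{1..n} - {i}. (1 - lvar i * lvar_inv j) ^ a j)))
         = fact (\<Sum>i\<in>{1..n}. a i) / (\<Prod>i\<in>{1..n}. fact (a i))"
  using main_gen[of "{1..n}" a] unfolding Fs_def by simp

end
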